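(* Let $m\ge 2$, $p$ a prime, and let $G=G_1\circ G_2\circ\dots\circ G_m$ be a finite group which is a central product of pairwise isomorphic extra-special subgroups $G_i$ of order $p^3$. Suppose $G$ admits an automorphism $\alpha$ of order $m$, with $m$ coprime to $p$, which cyclically permutes the factors $G_1,\dots,G_m$ and satisfies $G'\le C_G(\alpha)$. Then $[G,\alpha]$ is extra-special and has index $p^2$ in $G$.
   Context: A finite $p$-group $P$ is extra-special if $P'=Z(P)$ has order $p$. A group $G$ is a central product $H\circ K$ of subgroups $H,K$ if $G=\langle H,K\rangle$, $[H,K]=1$ and $H\cap K=Z(H)=Z(K)$; iterated central products are defined accordingly. $C_G(\alpha)$ is the fixed-point subgroup of $\alpha$, and $[G,\alpha]$ is the subgroup generated by all $g^{-1}g^{\alpha}$, $g\in G$. *)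

theory Defs
  imports "HOL-Algebra.Algebra"
begin

definition grp_center :: "('a, 'b) monoid_scheme \<Rightarrow> 'a set" where
  "grp_center G = {z \<in> carrier G. \<forall>g \<in> carrier G. z \<otimes>\<^bsub>G\<^esub> g = g \<otimes>\<^bsub>G\<^esub> z}"

definition extra_special :: "nat \<Rightarrow> ('a, 'b) monoid_scheme \<Rightarrow> bool" where
  "extra_special p P \<longleftrightarrow> group P \<and> finite (carrier P) \<and> (\<exists>n. card (carrier P) = p ^ n)
     \<and> derived P (carrier P) = grp_center P \<and> card (grp_center P) = p"

definition iterated_central_product :: "('a, 'b) monoid_scheme \<Rightarrow> (nat \<Rightarrow> 'a set) \<Rightarrow> nat \<Rightarrow> bool" where
  "iterated_central_product G Gs m \<longleftrightarrow>
     (\<forall>i<m. subgroup (Gs i) G) \<and>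
     generate G (\<Union>i<m. Gs i) = carrier G \<and>
     (\<forall>k. 1 \<le> k \<and> k < m \<longrightarrow>
        (let H = generate G (\<Union>i<k. Gs i) in
          (\<forall>h\<in>H. \<forall>x\<in>Gs k. h \<otimes>\<^bsub>G\<^esub> x = x \<otimes>\<^bsub>G\<^esub> h) \<and>
          H \<inter> Gs k = grp_center (G\<lparr>carrier := H\<rparr>) \<and>
          H \<inter> Gs k = grp_center (G\<lparr>carrier := Gs k\<rparr>)))"

definition fixed_points :: "('a, 'b) monoid_scheme \<Rightarrow> ('a \<Rightarrow> 'a) \<Rightarrow> 'a set" where
  "fixed_points G \<alpha> = {g \<in> carrier G. \<alpha> g = g}"

definition comm_aut :: "('a, 'b) monoid_scheme \<Rightarrow> ('a \<Rightarrow> 'a) \<Rightarrow> 'a set" where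
  "comm_aut G \<alpha> = generate G {inv\<^bsub>G\<^esub> g \<otimes>\<^bsub>G\<^esub> \<alpha> g | g. g \<in> carrier G}"

definition aut_order_is :: "('a, 'b) monoid_scheme \<Rightarrow> ('a \<Rightarrow> 'a) \<Rightarrow> nat \<Rightarrow> bool" where
  "aut_order_is G \<alpha> m \<longleftrightarrow> 0 < m \<and> (\<forall>x \<in> carrier G. (\<alpha> ^^ m) x = x)
     \<and> (\<forall>k. 0 < k \<and> k < m \<longrightarrow> (\<exists>x \<in> carrier G. (\<alpha> ^^ k) x \<noteq> x))"

end

theory Submission
  imports Defs
begin


lemma set_mult_iff: "x \<in> H <#>\<^bsub>G\<^esub> K \<longleftrightarrow> (\<exists>h\<in>H. \<exists>k\<in>K. x = h \<otimes>\<^bsub>G\<^esub> k)"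
  by (auto simp: set_mult_def)

context group begin

lemma inv_cancel_l1 [simp]: "x \<in> carrier G \<Longrightarrow> y \<in> carrier G \<Longrightarrow> inv x \<otimes> (x \<otimes> y) = y"
  by (simp add: m_assoc[symmetric])
lemma inv_cancel_l2 [simp]: "x \<in> carrier G \<Longrightarrow> y \<in> carrier G \<Longrightarrow> x \<otimes> (inv x \<otimes> y) = y"
  by (simp add: m_assoc[symmetric])

lemma commute_inv:
  assumes "a \<in> carrier G" "b \<in> carrier G" "a \<otimes> b = b \<otimes> a"
  shows "a \<otimes> inv b = inv b \<otimes> a"
proof -
  have e: "inv b \<otimes> (a \<otimes> b) \<otimes> inv b = inv b \<otimes> (b \<otimes> a) \<otimes> inv b" using assms(3) by simp
  have "inv b \<otimes> (b \<otimes> a) \<otimes> inv b = ((inv b \<otimes> b) \<otimes> a) \<otimes> inv b" using assms(1,2) by (simp add: m_assoc)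
  also have "\<dots> = a \<otimes> inv b" using assms(1,2) by simp
  finally have "inv b \<otimes> (b \<otimes> a) \<otimes> inv b = a \<otimes> inv b" .
  moreover have "inv b \<otimes> (a \<otimes> b) \<otimes> inv b = inv b \<otimes> a" using assms(1,2) by (simp add: m_assoc)
  ultimately show ?thesis using e by metis
qed

lemma commute_generate:
  assumes "S \<subseteq> carrier G" "a \<in> carrier G" "\<And>s. s \<in> S \<Longrightarrow> a \<otimes> s = s \<otimes> a"
    and "x \<in> generate G S"
  shows "a \<otimes> x = x \<otimes> a"
  using assms(4)
proof induct
  case one then show ?case using assms by simp
next
  case (incl h) then show ?case using assms by auto
next
  case (inv h) then show ?case using assms commute_inv by auto
next
  case (eng h1 h2)
  have c1: "h1 \<in> carrier G" "h2 \<in> carrier G" using eng generate_in_carrier assms(1) by auto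
  have "a \<otimes> (h1 \<otimes> h2) = (a \<otimes> h1) \<otimes> h2" using c1 assms by (simp add: m_assoc)
  also have "\<dots> = h1 \<otimes> (a \<otimes> h2)" using c1 assms eng by (simp add: m_assoc)
  also have "\<dots> = (h1 \<otimes> h2) \<otimes> a" using c1 assms eng by (simp add: m_assoc)
  finally show ?case .
qed

lemma commute_set_mult_subgroup:
  assumes H: "subgroup H G" and K: "subgroup K G"
    and c: "\<And>h k. h \<in> H \<Longrightarrow> k \<in> K \<Longrightarrow> h \<otimes> k = k \<otimes> h"
  shows "subgroup (H <#> K) G"
proof (rule subgroupI)
  show "H <#> K \<subseteq> carrier G"
  proof
    fix x assume "x \<in> H <#> K"
    then obtain h k where hk: "h \<in> H" "k \<in> K" "x = h \<otimes> k" unfolding set_mult_iff by blast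
    show "x \<in> carrier G" using subgroup.mem_carrier[OF H hk(1)] subgroup.mem_carrier[OF K hk(2)] hk(3)
      by simp
  qed
  show "H <#> K \<noteq> {}"
  proof -
    have "\<one> = \<one> \<otimes> \<one>" by simp
    hence "\<one> \<in> H <#> K" using subgroup.one_closed[OF H] subgroup.one_closed[OF K] unfolding set_mult_iff by blast
    thus ?thesis by blast
  qed
next
  fix x assume "x \<in> H <#> K"
  then obtain h k where hk: "h \<in> H" "k \<in> K" "x = h \<otimes> k" unfolding set_mult_iff by blast
  have cc: "h \<in> carrier G" "k \<in> carrier G" using subgroup.mem_carrier[OF H hk(1)] subgroup.mem_carrier[OF K hk(2)] .
  have i1: "inv h \<in> H" "inv k \<in> K" using subgroup.m_inv_closed[OF H hk(1)] subgroup.m_inv_closed[OF K hk(2)] .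
  have "inv x = inv k \<otimes> inv h" using hk cc by (simp add: inv_mult_group)
  also have "\<dots> = inv h \<otimes> inv k" using c[OF i1] by simp
  finally show "inv x \<in> H <#> K" using i1 unfolding set_mult_iff by blast
next
  fix x y assume "x \<in> H <#> K" "y \<in> H <#> K"
  then obtain h k h' k' where hk: "h \<in> H" "k \<in> K" "x = h \<otimes> k" "h' \<in> H" "k' \<in> K" "y = h' \<otimes> k'"
    unfolding set_mult_iff by blast
  have cc: "h \<in> carrier G" "k \<in> carrier G" "h' \<in> carrier G" "k' \<in> carrier G"
    using subgroup.mem_carrier[OF H hk(1)] subgroup.mem_carrier[OF K hk(2)]
      subgroup.mem_carrier[OF H hk(4)] subgroup.mem_carrier[OF K hk(5)] by auto
  have "x \<otimes> y = h \<otimes> (k \<otimes> h') \<otimes> k'" using hk(3,6) cc by (simp add: m_assoc)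
  also have "\<dots> = h \<otimes> (h' \<otimes> k) \<otimes> k'" using c[OF hk(4) hk(2)] by simp
  also have "\<dots> = (h \<otimes> h') \<otimes> (k \<otimes> k')" using cc by (simp add: m_assoc)
  finally show "x \<otimes> y \<in> H <#> K"
    using subgroup.m_closed[OF H hk(1,4)] subgroup.m_closed[OF K hk(2,5)] unfolding set_mult_iff by blast
qed

lemma generate_union_commute:
  assumes H: "subgroup H G" and K: "subgroup K G"
    and c: "\<And>h k. h \<in> H \<Longrightarrow> k \<in> K \<Longrightarrow> h \<otimes> k = k \<otimes> h"
  shows "generate G (H \<union> K) = H <#> K"
proof
  show "generate G (H \<union> K) \<subseteq> H <#> K"
  proof (rule generate_subgroup_incl[OF _ commute_set_mult_subgroup[OF H K c]])
    show "H \<union> K \<subseteq> H <#> K"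
    proof
      fix x assume "x \<in> H \<union> K"
      then show "x \<in> H <#> K"
      proof
        assume x: "x \<in> H"
        have "x = x \<otimes> \<one>" using subgroup.mem_carrier[OF H x] by simp
        then show ?thesis using x subgroup.one_closed[OF K] unfolding set_mult_iff by blast
      next
        assume x: "x \<in> K"
        have "x = \<one> \<otimes> x" using subgroup.mem_carrier[OF K x] by simp
        then show ?thesis using x subgroup.one_closed[OF H] unfolding set_mult_iff by blast
      qed
    qed
  qed
  show "H <#> K \<subseteq> generate G (H \<union> K)"
  proof
    fix x assume "x \<in> H <#> K"
    then obtain h k where hk: "h \<in> H" "k \<in> K" "x = h \<otimes> k" unfolding set_mult_iff by blast
    have "h \<in> generate G (H \<union> K)" "k \<in> generate G (H \<union> K)"
      using hk by (auto intro: generate.incl)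
    then show "x \<in> generate G (H \<union> K)" using hk(3) by (simp add: generate.eng)
  qed
qed

lemma generate_union_generate:
  assumes "S \<subseteq> carrier G" "T \<subseteq> carrier G"
  shows "generate G (S \<union> T) = generate G (generate G S \<union> T)"
proof
  show "generate G (S \<union> T) \<subseteq> generate G (generate G S \<union> T)"
    by (rule mono_generate) (auto intro: generate.incl)
  show "generate G (generate G S \<union> T) \<subseteq> generate G (S \<union> T)"
  proof (rule generate_subgroup_incl)
    show "subgroup (generate G (S \<union> T)) G" using assms by (intro generate_is_subgroup) auto
    show "generate G S \<union> T \<subseteq> generate G (S \<union> T)"
      using mono_generate[of S "S \<union> T"] by (auto intro: generate.incl)
  qed
qed

lemma prime_order_sub:
  assumes Z: "subgroup Z G" and cZ: "card Z = p" and p: "Factorial_Ring.prime p"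
    and K: "subgroup K G" and KZ: "K \<subseteq> Z" and x: "x \<in> K" "x \<noteq> \<one>"
  shows "K = Z"
proof -
  have fZ: "finite Z" using cZ p by (metis card.infinite not_prime_0)
  have sK: "subgroup K (G\<lparr>carrier := Z\<rparr>)" by (rule subgroup_incl[OF K Z KZ])
  have gZ: "group (G\<lparr>carrier := Z\<rparr>)" by (rule subgroup_imp_group[OF Z])
  have "card (rcosets\<^bsub>G\<lparr>carrier := Z\<rparr>\<^esub> K) * card K = order (G\<lparr>carrier := Z\<rparr>)"
    by (rule group.lagrange[OF gZ sK])
  hence dv: "card K dvd p" using cZ by (simp add: order_def) (metis dvd_triv_right)
  have "{\<one>, x} \<subseteq> K" using x K subgroup.one_closed by auto
  hence "card {\<one>, x} \<le> card K" using fZ KZ by (meson card_mono finite_subset)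
  hence "card K \<noteq> 1" using x by auto
  hence "card K = p" using dv p by (meson prime_nat_iff)
  thus ?thesis using KZ fZ cZ by (simp add: card_subset_eq)
qed

lemma prime_order_coprime_pow:
  assumes Z: "subgroup Z G" and cZ: "card Z = p" and p: "Factorial_Ring.prime p"
    and z: "z \<in> Z" and zm: "z [^] (m::nat) = \<one>" and cp: "coprime m p"
  shows "z = \<one>"
proof -
  have gZ: "group (G\<lparr>carrier := Z\<rparr>)" by (rule subgroup_imp_group[OF Z])
  have "z [^]\<^bsub>G\<lparr>carrier := Z\<rparr>\<^esub> order (G\<lparr>carrier := Z\<rparr>) = \<one>\<^bsub>G\<lparr>carrier := Z\<rparr>\<^esub>"
    by (rule group.pow_order_eq_1[OF gZ]) (simp add: z)
  hence zp: "z [^] p = \<one>" using cZ by (simp add: order_def nat_pow_consistent[symmetric])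
  have zc: "z \<in> carrier G" using subgroup.mem_carrier[OF Z z] .
  have "ord z dvd p" "ord z dvd m" using zp zm pow_eq_id[OF zc] by auto
  hence "ord z dvd gcd m p" by (simp add: gcd_greatest)
  moreover have "gcd m p = 1" using cp by (simp add: coprime_iff_gcd_eq_1)
  ultimately have "ord z dvd 1" by simp
  hence "z [^] (1::nat) = \<one>" using pow_eq_id[OF zc] by blast
  thus ?thesis using zc by simp
qed

end


definition gcomm :: "('a, 'b) monoid_scheme \<Rightarrow> 'a \<Rightarrow> 'a \<Rightarrow> 'a" where
  "gcomm G a b = a \<otimes>\<^bsub>G\<^esub> b \<otimes>\<^bsub>G\<^esub> inv\<^bsub>G\<^esub> a \<otimes>\<^bsub>G\<^esub> inv\<^bsub>G\<^esub> b"

context group begin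

lemma left_cancel [simp]:
  "x \<in> carrier G \<Longrightarrow> y \<in> carrier G \<Longrightarrow> z \<in> carrier G \<Longrightarrow> x \<otimes> y = x \<otimes> z \<longleftrightarrow> y = z"
proof
  assume a: "x \<in> carrier G" "y \<in> carrier G" "z \<in> carrier G" "x \<otimes> y = x \<otimes> z"
  have "inv x \<otimes> (x \<otimes> y) = inv x \<otimes> (x \<otimes> z)" using a(4) by simp
  thus "y = z" using a(1-3) by simp
qed simp

lemma gcomm_closed [simp]: "a \<in> carrier G \<Longrightarrow> b \<in> carrier G \<Longrightarrow> gcomm G a b \<in> carrier G"
  by (simp add: gcomm_def)

lemma gcomm_mult_right:
  assumes "g \<in> carrier G" "a \<in> carrier G" "b \<in> carrier G"
  shows "gcomm G g (a \<otimes> b) = gcomm G g a \<otimes> (a \<otimes> gcomm G g b \<otimes> inv a)"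
  using assms by (simp add: gcomm_def m_assoc inv_mult_group)

lemma gcomm_inv_right:
  assumes "g \<in> carrier G" "h \<in> carrier G"
  shows "gcomm G g (inv h) = inv h \<otimes> inv (gcomm G g h) \<otimes> h"
  using assms by (simp add: gcomm_def m_assoc inv_mult_group)

lemma gcomm_swap:
  assumes "g \<in> carrier G" "h \<in> carrier G"
  shows "gcomm G h g = inv (gcomm G g h)"
  using assms by (simp add: gcomm_def m_assoc inv_mult_group)

lemma gcomm_one_iff:
  assumes "g \<in> carrier G" "h \<in> carrier G"
  shows "gcomm G g h = \<one> \<longleftrightarrow> g \<otimes> h = h \<otimes> g"
proof -
  have "gcomm G g h = \<one> \<longleftrightarrow> gcomm G g h \<otimes> (h \<otimes> g) = \<one> \<otimes> (h \<otimes> g)"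
    using assms by (simp only: right_cancel gcomm_closed m_closed one_closed)
  also have "\<dots> \<longleftrightarrow> gcomm G g h \<otimes> (h \<otimes> g) = h \<otimes> g" using assms by simp
  also have "gcomm G g h \<otimes> (h \<otimes> g) = g \<otimes> h"
    using assms by (simp add: gcomm_def m_assoc)
  finally show ?thesis .
qed

lemma central_gcomm_generate:
  assumes Z: "subgroup Z G" and Zc: "\<And>z g. z \<in> Z \<Longrightarrow> g \<in> carrier G \<Longrightarrow> z \<otimes> g = g \<otimes> z"
    and S: "S \<subseteq> carrier G" and g: "g \<in> carrier G"
    and gs: "\<And>s. s \<in> S \<Longrightarrow> gcomm G g s \<in> Z"
    and x: "x \<in> generate G S"
  shows "gcomm G g x \<in> Z"
  using x
proof induct
  case one then show ?case using g subgroup.one_closed[OF Z] by (simp add: gcomm_def)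
next
  case (incl h) then show ?case using gs by simp
next
  case (inv h)
  have h: "h \<in> carrier G" using inv S by auto
  have c: "gcomm G g h \<in> Z" using gs inv by simp
  have ic: "inv (gcomm G g h) \<in> Z" using subgroup.m_inv_closed[OF Z c] .
  have icc: "inv (gcomm G g h) \<in> carrier G" using g h by simp
  have "gcomm G g (inv h) = inv h \<otimes> inv (gcomm G g h) \<otimes> h" using gcomm_inv_right[OF g h] .
  also have "\<dots> = inv h \<otimes> (h \<otimes> inv (gcomm G g h))" using Zc[OF ic h] h icc by (simp add: m_assoc)
  also have "\<dots> = inv (gcomm G g h)" using h icc by simp
  finally show ?case using ic by simp
next
  case (eng h1 h2)
  have h: "h1 \<in> carrier G" "h2 \<in> carrier G" using eng generate_in_carrier[OF S] by auto
  have c2c: "gcomm G g h2 \<in> carrier G" using g h by simp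
  have "gcomm G g (h1 \<otimes> h2) = gcomm G g h1 \<otimes> (h1 \<otimes> gcomm G g h2 \<otimes> inv h1)"
    using gcomm_mult_right[OF g h] .
  also have "h1 \<otimes> gcomm G g h2 \<otimes> inv h1 = gcomm G g h2 \<otimes> h1 \<otimes> inv h1"
    using Zc[OF eng(4) h(1)] by simp
  also have "\<dots> = gcomm G g h2" using h c2c by (simp add: m_assoc)
  finally show ?case using eng subgroup.m_closed[OF Z] by simp
qed

lemma normal_set_mult_subgroup':
  assumes H: "subgroup H G" and N: "subgroup N G"
    and nc: "\<And>g n. g \<in> carrier G \<Longrightarrow> n \<in> N \<Longrightarrow> g \<otimes> n \<otimes> inv g \<in> N"
  shows "subgroup (H <#> N) G"
proof (rule subgroupI)
  show "H <#> N \<subseteq> carrier G"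
  proof
    fix x assume "x \<in> H <#> N"
    then obtain h k where hk: "h \<in> H" "k \<in> N" "x = h \<otimes> k" unfolding set_mult_iff by blast
    show "x \<in> carrier G" using subgroup.mem_carrier[OF H hk(1)] subgroup.mem_carrier[OF N hk(2)] hk(3)
      by simp
  qed
  show "H <#> N \<noteq> {}"
  proof -
    have "\<one> = \<one> \<otimes> \<one>" by simp
    hence "\<one> \<in> H <#> N" using subgroup.one_closed[OF H] subgroup.one_closed[OF N] unfolding set_mult_iff by blast
    thus ?thesis by blast
  qed
next
  fix x assume "x \<in> H <#> N"
  then obtain h k where hk: "h \<in> H" "k \<in> N" "x = h \<otimes> k" unfolding set_mult_iff by blast
  have cc: "h \<in> carrier G" "k \<in> carrier G" using subgroup.mem_carrier[OF H hk(1)] subgroup.mem_carrier[OF N hk(2)] .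
  have i1: "inv h \<in> H" "inv k \<in> N" using subgroup.m_inv_closed[OF H hk(1)] subgroup.m_inv_closed[OF N hk(2)] .
  have i2: "h \<otimes> inv k \<otimes> inv h \<in> N" using nc[OF cc(1) i1(2)] .
  have "inv x = inv k \<otimes> inv h" using hk cc by (simp add: inv_mult_group)
  also have "\<dots> = inv h \<otimes> (h \<otimes> inv k \<otimes> inv h)" using cc by (simp add: m_assoc)
  finally show "inv x \<in> H <#> N" using i1 i2 unfolding set_mult_iff by blast
next
  fix x y assume "x \<in> H <#> N" "y \<in> H <#> N"
  then obtain h k h' k' where hk: "h \<in> H" "k \<in> N" "x = h \<otimes> k" "h' \<in> H" "k' \<in> N" "y = h' \<otimes> k'"
    unfolding set_mult_iff by blast
  have cc: "h \<in> carrier G" "k \<in> carrier G" "h' \<in> carrier G" "k' \<in> carrier G"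
    using subgroup.mem_carrier[OF H hk(1)] subgroup.mem_carrier[OF N hk(2)]
      subgroup.mem_carrier[OF H hk(4)] subgroup.mem_carrier[OF N hk(5)] by auto
  have i2: "inv h' \<otimes> k \<otimes> inv (inv h') \<in> N" using nc[OF inv_closed[OF cc(3)] hk(2)] .
  have "x \<otimes> y = (h \<otimes> h') \<otimes> ((inv h' \<otimes> k \<otimes> inv (inv h')) \<otimes> k')" using hk(3,6) cc by (simp add: m_assoc)
  then show "x \<otimes> y \<in> H <#> N"
    using subgroup.m_closed[OF H hk(1,4)] subgroup.m_closed[OF N i2 hk(5)] unfolding set_mult_iff by blast
qed

lemma conj_eq_commute:
  assumes "a \<in> carrier G" "b \<in> carrier G" "c \<in> carrier G" "a \<otimes> b \<otimes> inv a = c \<otimes> b \<otimes> inv c"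
  shows "(inv c \<otimes> a) \<otimes> b = b \<otimes> (inv c \<otimes> a)"
proof -
  have "inv c \<otimes> (a \<otimes> b \<otimes> inv a) \<otimes> a = inv c \<otimes> (c \<otimes> b \<otimes> inv c) \<otimes> a" using assms(4) by simp
  moreover have "inv c \<otimes> (a \<otimes> b \<otimes> inv a) \<otimes> a = (inv c \<otimes> a) \<otimes> b" using assms(1-3) by (simp add: m_assoc)
  moreover have "inv c \<otimes> (c \<otimes> b \<otimes> inv c) \<otimes> a = b \<otimes> (inv c \<otimes> a)" using assms(1-3) by (simp add: m_assoc)
  ultimately show ?thesis by simp
qed

lemma card_set_mult:
  assumes fin: "finite (carrier G)" and H: "subgroup H G" and K: "subgroup K G"
  shows "card (H <#> K) * card (H \<inter> K) = card H * card K"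
proof -
  let ?F = "\<lambda>x. {(h,k). h \<in> H \<and> k \<in> K \<and> h \<otimes> k = x}"
  have Hc: "H \<subseteq> carrier G" and Kc: "K \<subseteq> carrier G" using H K subgroup.subset by auto
  have fH: "finite H" "finite K" using Hc Kc fin finite_subset by auto
  have HK: "H \<times> K = (\<Union>x\<in>H <#> K. ?F x)"
  proof
    show "H \<times> K \<subseteq> (\<Union>x\<in>H <#> K. ?F x)"
    proof
      fix y assume "y \<in> H \<times> K"
      then obtain a b where ab: "y = (a, b)" "a \<in> H" "b \<in> K" by auto
      have "a \<otimes> b \<in> H <#> K" using ab unfolding set_mult_iff by blast
      thus "y \<in> (\<Union>x\<in>H <#> K. ?F x)" using ab by auto
    qed
  qed auto
  have fHK: "finite (H <#> K)"
  proof -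
    have "H <#> K \<subseteq> carrier G" using Hc Kc by (auto simp: set_mult_def)
    thus ?thesis using fin finite_subset by auto
  qed
  have fF: "\<forall>x\<in>H <#> K. finite (?F x)"
  proof
    fix x show "finite (?F x)" using finite_subset[of "?F x" "H \<times> K"] fH by auto
  qed
  have dj: "\<forall>x\<in>H <#> K. \<forall>y\<in>H <#> K. x \<noteq> y \<longrightarrow> ?F x \<inter> ?F y = {}" by auto
  have cardF: "card (?F x) = card (H \<inter> K)" if x: "x \<in> H <#> K" for x
  proof -
    obtain h0 k0 where hk0: "h0 \<in> H" "k0 \<in> K" "x = h0 \<otimes> k0" using x unfolding set_mult_iff by blast
    have c0: "h0 \<in> carrier G" "k0 \<in> carrier G" using hk0 Hc Kc by auto
    have "bij_betw (\<lambda>t. (h0 \<otimes> t, inv t \<otimes> k0)) (H \<inter> K) (?F x)"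
    proof (rule bij_betw_imageI)
      show "inj_on (\<lambda>t. (h0 \<otimes> t, inv t \<otimes> k0)) (H \<inter> K)"
      proof (rule inj_onI)
        fix t t' assume t: "t \<in> H \<inter> K" "t' \<in> H \<inter> K"
          "(h0 \<otimes> t, inv t \<otimes> k0) = (h0 \<otimes> t', inv t' \<otimes> k0)"
        have "t \<in> carrier G" "t' \<in> carrier G" using t(1,2) Hc by auto
        thus "t = t'" using t(3) c0 by simp
      qed
      show "(\<lambda>t. (h0 \<otimes> t, inv t \<otimes> k0)) ` (H \<inter> K) = ?F x"
      proof
        show "(\<lambda>t. (h0 \<otimes> t, inv t \<otimes> k0)) ` (H \<inter> K) \<subseteq> ?F x"
        proof
          fix y assume "y \<in> (\<lambda>t. (h0 \<otimes> t, inv t \<otimes> k0)) ` (H \<inter> K)"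
          then obtain t where t: "t \<in> H" "t \<in> K" "y = (h0 \<otimes> t, inv t \<otimes> k0)" by auto
          have tc: "t \<in> carrier G" using t Hc by auto
          have "h0 \<otimes> t \<in> H" using subgroup.m_closed[OF H hk0(1) t(1)] .
          moreover have "inv t \<otimes> k0 \<in> K" using subgroup.m_closed[OF K subgroup.m_inv_closed[OF K t(2)] hk0(2)] .
          moreover have "h0 \<otimes> t \<otimes> (inv t \<otimes> k0) = x" using hk0(3) c0 tc by (simp add: m_assoc)
          ultimately show "y \<in> ?F x" using t(3) by auto
        qed
        show "?F x \<subseteq> (\<lambda>t. (h0 \<otimes> t, inv t \<otimes> k0)) ` (H \<inter> K)"
        proof
          fix y assume "y \<in> ?F x"
          then obtain h k where hk: "y = (h, k)" "h \<in> H" "k \<in> K" "h \<otimes> k = x" by auto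
          have c: "h \<in> carrier G" "k \<in> carrier G" using hk Hc Kc by auto
          let ?t = "inv h0 \<otimes> h"
          have e: "?t = k0 \<otimes> inv k"
          proof -
            have "inv h0 \<otimes> (h \<otimes> k) \<otimes> inv k = inv h0 \<otimes> (h0 \<otimes> k0) \<otimes> inv k" using hk(4) hk0(3) by simp
            thus ?thesis using c c0 by (simp add: m_assoc)
          qed
          have tH: "?t \<in> H" using subgroup.m_closed[OF H subgroup.m_inv_closed[OF H hk0(1)] hk(2)] .
          have tK: "?t \<in> K" unfolding e using subgroup.m_closed[OF K hk0(2) subgroup.m_inv_closed[OF K hk(3)]] .
          have "h0 \<otimes> ?t = h" using c c0 by simp
          moreover have "inv ?t \<otimes> k0 = k" unfolding e using c c0 by (simp add: m_assoc inv_mult_group)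
          ultimately show "y \<in> (\<lambda>t. (h0 \<otimes> t, inv t \<otimes> k0)) ` (H \<inter> K)"
            using tH tK hk(1) by (auto intro!: image_eqI[of _ _ ?t])
        qed
      qed
    qed
    thus ?thesis by (simp add: bij_betw_same_card[symmetric])
  qed
  have "card H * card K = card (H \<times> K)" by (simp add: card_cartesian_product)
  also have "\<dots> = (\<Sum>x\<in>H <#> K. card (?F x))" unfolding HK by (rule card_UN_disjoint[OF fHK fF dj])
  also have "\<dots> = (\<Sum>x\<in>H <#> K. card (H \<inter> K))" using cardF by simp
  also have "\<dots> = card (H <#> K) * card (H \<inter> K)" by simp
  finally show ?thesis by simp
qed

end


primrec dprod :: "('a, 'b) monoid_scheme \<Rightarrow> ('a \<Rightarrow> 'a) \<Rightarrow> 'a \<Rightarrow> nat \<Rightarrow> 'a" where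
  "dprod G f y 0 = \<one>\<^bsub>G\<^esub>"
| "dprod G f y (Suc k) = dprod G f y k \<otimes>\<^bsub>G\<^esub> (f ^^ Suc k) y"

lemma grp_center_restr:
  fixes G :: "('a, 'b) monoid_scheme" (structure)
  shows "grp_center (G\<lparr>carrier := T\<rparr>) = {z \<in> T. \<forall>g\<in>T. z \<otimes> g = g \<otimes> z}"
  by (simp add: grp_center_def)

locale esetting = group G for G (structure) +
  fixes Gs :: "nat \<Rightarrow> 'a set" and \<alpha> :: "'a \<Rightarrow> 'a" and m p :: nat
  assumes fin: "finite (carrier G)"
    and m2: "m \<ge> 2" and pp: "Factorial_Ring.prime p" and cop: "coprime m p"
    and icp: "iterated_central_product G Gs m"
    and es: "\<forall>i<m. extra_special p (G\<lparr>carrier := Gs i\<rparr>) \<and> card (Gs i) = p ^ 3"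
    and aiso: "\<alpha> \<in> iso G G"
    and aord: "aut_order_is G \<alpha> m"
    and aperm: "\<forall>i<m. \<alpha> ` (Gs i) = Gs (Suc i mod m)"
    and ader: "derived G (carrier G) \<subseteq> fixed_points G \<alpha>"
begin

definition "HH k = generate G (\<Union>i<k. Gs i)"
definition "ZG i = grp_center (G\<lparr>carrier := Gs i\<rparr>)"
definition "Z = ZG 0"

lemma ZG_eq: "ZG i = {z \<in> Gs i. \<forall>g\<in>Gs i. z \<otimes> g = g \<otimes> z}"
  by (simp add: ZG_def grp_center_restr)

lemma sub: "i < m \<Longrightarrow> subgroup (Gs i) G"
  using icp by (simp add: iterated_central_product_def)

lemma Gs_carr: "i < m \<Longrightarrow> x \<in> Gs i \<Longrightarrow> x \<in> carrier G"
  by (rule subgroup.mem_carrier[OF sub])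

lemma gen_all: "generate G (\<Union>i<m. Gs i) = carrier G"
  using icp by (simp add: iterated_central_product_def)

lemma icpk:
  assumes "1 \<le> k" "k < m"
  shows "(\<forall>h\<in>HH k. \<forall>x\<in>Gs k. h \<otimes> x = x \<otimes> h) \<and>
         HH k \<inter> Gs k = grp_center (G\<lparr>carrier := HH k\<rparr>) \<and> HH k \<inter> Gs k = ZG k"
proof -
  note x = conjunct2[OF conjunct2[OF icp[unfolded iterated_central_product_def]], rule_format, OF conjI[OF assms]]
  show ?thesis using x unfolding Let_def HH_def ZG_def .
qed

lemma icpk_center:
  assumes "1 \<le> k" "k < m"
  shows "grp_center (G\<lparr>carrier := HH k\<rparr>) = ZG k" "HH k \<inter> Gs k = ZG k"
proof -
  note c = icpk[OF assms]
  note a1 = conjunct1[OF conjunct2[OF c]] and a2 = conjunct2[OF conjunct2[OF c]]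
  show "grp_center (G\<lparr>carrier := HH k\<rparr>) = ZG k" using a1 a2 by (rule subst)
  show "HH k \<inter> Gs k = ZG k" by (rule a2)
qed

lemma p_gt1: "p > 1" using pp prime_gt_1_nat by blast

lemma cardGs: "i < m \<Longrightarrow> card (Gs i) = p ^ 3" using es by simp

lemma es_i:
  assumes "i < m"
  shows "derived (G\<lparr>carrier := Gs i\<rparr>) (Gs i) = ZG i \<and> card (ZG i) = p"
proof -
  note x = conjunct1[OF es[rule_format, OF assms]]
  note y = conjunct2[OF conjunct2[OF conjunct2[OF x[unfolded extra_special_def]]]]
  show ?thesis using y unfolding ZG_def by simp
qed

lemma comm_lt:
  assumes "i < j" "j < m" "x \<in> Gs i" "y \<in> Gs j"
  shows "x \<otimes> y = y \<otimes> x"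
proof -
  have "x \<in> HH j" unfolding HH_def using assms by (auto intro: generate.incl)
  thus ?thesis using icpk[of j] assms by auto
qed

lemma comm_ij:
  assumes "i < m" "j < m" "i \<noteq> j" "x \<in> Gs i" "y \<in> Gs j"
  shows "x \<otimes> y = y \<otimes> x"
proof (cases "i < j")
  case True thus ?thesis using comm_lt assms by blast
next
  case False hence "j < i" using assms by auto
  thus ?thesis using comm_lt[of j i y x] assms by auto
qed

lemma UN_carr: "k \<le> m \<Longrightarrow> (\<Union>i<k. Gs i) \<subseteq> carrier G"
proof
  fix x assume km: "k \<le> m" and "x \<in> (\<Union>i<k. Gs i)"
  then obtain i where i: "i < k" "x \<in> Gs i" by blast
  have "i < m" using i(1) km by simp
  thus "x \<in> carrier G" using i(2) by (rule Gs_carr)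
qed

lemma HH_sub: "k \<le> m \<Longrightarrow> subgroup (HH k) G"
  unfolding HH_def using UN_carr by (simp add: generate_is_subgroup)

lemma HH_carr: "k \<le> m \<Longrightarrow> x \<in> HH k \<Longrightarrow> x \<in> carrier G"
  by (rule subgroup.mem_carrier[OF HH_sub])

lemma HH_comm:
  assumes k: "k < m" and h: "h \<in> HH k" and x: "x \<in> Gs k"
  shows "h \<otimes> x = x \<otimes> h"
proof -
  have S: "(\<Union>i<k. Gs i) \<subseteq> carrier G" using k by (intro UN_carr) simp
  have xc: "x \<in> carrier G" using k x by (rule Gs_carr)
  have hg: "h \<in> generate G (\<Union>i<k. Gs i)" using h unfolding HH_def .
  have cm: "x \<otimes> s = s \<otimes> x" if s: "s \<in> (\<Union>i<k. Gs i)" for s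
  proof -
    obtain i where i: "i < k" "s \<in> Gs i" using s by blast
    have "s \<otimes> x = x \<otimes> s" by (rule comm_lt[OF i(1) k i(2) x])
    thus ?thesis by (rule sym)
  qed
  have "x \<otimes> h = h \<otimes> x" by (rule commute_generate[OF S xc cm hg])
  thus ?thesis by (rule sym)
qed

lemma HH_Suc:
  assumes "k < m"
  shows "HH (Suc k) = HH k <#> Gs k"
proof -
  have km: "k \<le> m" using assms by simp
  have S: "(\<Union>i<k. Gs i) \<subseteq> carrier G" using UN_carr[OF km] .
  have T: "Gs k \<subseteq> carrier G" using subgroup.subset[OF sub[OF assms]] .
  have "(\<Union>i<Suc k. Gs i) = (\<Union>i<k. Gs i) \<union> Gs k" by (auto simp: lessThan_Suc)
  hence "HH (Suc k) = generate G ((\<Union>i<k. Gs i) \<union> Gs k)" by (simp add: HH_def)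
  also have "generate G ((\<Union>i<k. Gs i) \<union> Gs k) = generate G (HH k \<union> Gs k)"
    unfolding HH_def by (rule generate_union_generate[OF S T])
  also have "\<dots> = HH k <#> Gs k"
    by (rule generate_union_commute[OF HH_sub[OF km] sub[OF assms] HH_comm[OF assms]])
  finally show ?thesis .
qed

lemma HH1: "HH 1 = Gs 0"
proof -
  have "(\<Union>i<1. Gs i) = Gs 0" by auto
  hence e: "HH 1 = generate G (Gs 0)" by (simp add: HH_def)
  have m0: "0 < m" using m2 by simp
  have "generate G (Gs 0) \<subseteq> Gs 0" by (rule generate_subgroup_incl[OF subset_refl sub[OF m0]])
  moreover have "Gs 0 \<subseteq> generate G (Gs 0)" by (auto intro: generate.incl)
  ultimately show ?thesis using e by auto
qed

lemma HHm: "HH m = carrier G" using gen_all by (simp add: HH_def)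

lemma card_HH: "k < m \<Longrightarrow> card (HH (Suc k)) = p ^ (2 * k + 3)"
proof (induction k)
  case 0 then show ?case using HH1 cardGs[of 0] by simp
next
  case (Suc k)
  have sk: "Suc k < m" using Suc.prems .
  have km: "k < m" "Suc k \<le> m" using sk by auto
  have e: "HH (Suc (Suc k)) = HH (Suc k) <#> Gs (Suc k)" using HH_Suc[OF sk] .
  have i: "HH (Suc k) \<inter> Gs (Suc k) = ZG (Suc k)" using icpk_center(2)[OF _ sk] by simp
  have "card (HH (Suc (Suc k))) * card (ZG (Suc k)) = card (HH (Suc k)) * card (Gs (Suc k))"
    unfolding e i[symmetric] by (rule card_set_mult[OF fin HH_sub[OF km(2)] sub[OF sk]])
  hence "card (HH (Suc (Suc k))) * p = p ^ (2 * k + 3) * p ^ 3"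
    using Suc.IH[OF km(1)] es_i[OF sk] cardGs[OF sk] by simp
  also have "\<dots> = p ^ (2 * k + 3 + 3)" by (simp only: power_add)
  also have "2 * k + 3 + 3 = Suc (2 * Suc k + 3)" by simp
  also have "p ^ (Suc (2 * Suc k + 3)) = p ^ (2 * Suc k + 3) * p" by (simp only: power_Suc2)
  finally show ?case using p_gt1 by simp
qed

lemma card_G: "card (carrier G) = p ^ (2 * m + 1)"
proof -
  have e: "Suc (m - 1) = m" using m2 by auto
  have "m - 1 < m" using m2 by simp
  note card_HH[OF this]
  hence "card (carrier G) = p ^ (2 * (m - 1) + 3)" unfolding e HHm .
  also have "2 * (m - 1) + 3 = 2 * m + 1" using m2 by auto
  finally show ?thesis .
qed

lemma ZG_step:
  assumes k1: "1 \<le> k" and sk: "Suc k < m"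
  shows "ZG k = ZG (Suc k)"
proof -
  have k: "k < m" "k \<le> m" using sk by auto
  note ic = icpk_center[OF k1 k(1)]
  have "ZG k \<subseteq> ZG (Suc k)"
  proof
    fix z assume z: "z \<in> ZG k"
    have "z \<in> grp_center (G\<lparr>carrier := HH k\<rparr>)" using z ic(1) by simp
    hence zc: "z \<in> HH k" "\<forall>h\<in>HH k. z \<otimes> h = h \<otimes> z" by (simp_all add: grp_center_restr)
    have zk: "z \<in> Gs k" "\<forall>g\<in>Gs k. z \<otimes> g = g \<otimes> z" using z by (simp_all add: ZG_eq)
    have "z \<in> (\<Union>i<Suc k. Gs i)" using zk(1) by blast
    hence zH: "z \<in> HH (Suc k)" unfolding HH_def by (rule generate.incl)
    have "\<forall>g\<in>HH (Suc k). z \<otimes> g = g \<otimes> z"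
    proof
      fix g assume "g \<in> HH (Suc k)"
      then obtain h x where hx: "h \<in> HH k" "x \<in> Gs k" "g = h \<otimes> x"
        unfolding HH_Suc[OF k(1)] set_mult_iff by blast
      have c: "h \<in> carrier G" "x \<in> carrier G" "z \<in> carrier G"
        using HH_carr[OF k(2) hx(1)] Gs_carr[OF k(1) hx(2)] Gs_carr[OF k(1) zk(1)] by auto
      have e1: "z \<otimes> h = h \<otimes> z" using zc(2) hx(1) by blast
      have e2: "z \<otimes> x = x \<otimes> z" using zk(2) hx(2) by blast
      have "z \<otimes> (h \<otimes> x) = (z \<otimes> h) \<otimes> x" using c by (simp add: m_assoc)
      also have "\<dots> = h \<otimes> (z \<otimes> x)" unfolding e1 using c by (simp add: m_assoc)
      also have "\<dots> = (h \<otimes> x) \<otimes> z" unfolding e2 using c by (simp add: m_assoc)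
      finally show "z \<otimes> g = g \<otimes> z" using hx(3) by simp
    qed
    hence "z \<in> grp_center (G\<lparr>carrier := HH (Suc k)\<rparr>)" using zH by (simp add: grp_center_restr)
    thus "z \<in> ZG (Suc k)" using icpk_center(1)[OF _ sk] by simp
  qed
  moreover have "card (ZG k) = card (ZG (Suc k))" using es_i[OF k(1)] es_i[OF sk] by simp
  moreover have "finite (ZG (Suc k))"
  proof -
    have "ZG (Suc k) \<subseteq> Gs (Suc k)" by (auto simp: ZG_eq)
    also have "\<dots> \<subseteq> carrier G" using subgroup.subset[OF sub[OF sk]] .
    finally show ?thesis using fin finite_subset by auto
  qed
  ultimately show ?thesis by (simp add: card_subset_eq)
qed

lemma ZG1: "ZG 1 = ZG 0"
proof -
  have m1: "1 < m" using m2 by simp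
  have "ZG 1 = grp_center (G\<lparr>carrier := HH 1\<rparr>)" using icpk_center(1)[OF le_refl m1] by simp
  thus ?thesis unfolding HH1 ZG_def by simp
qed

lemma ZG_all: "i < m \<Longrightarrow> ZG i = Z"
proof -
  have "\<forall>k. Suc k < m \<longrightarrow> ZG (Suc k) = ZG 0"
  proof
    fix k show "Suc k < m \<longrightarrow> ZG (Suc k) = ZG 0"
    proof (induction k)
      case 0 then show ?case using ZG1 by simp
    next
      case (Suc k)
      show ?case
      proof
        assume a: "Suc (Suc k) < m"
        hence "Suc k < m" by simp
        hence "ZG (Suc k) = ZG 0" using Suc.IH by simp
        moreover have "ZG (Suc k) = ZG (Suc (Suc k))" by (rule ZG_step) (use a in simp_all)
        ultimately show "ZG (Suc (Suc k)) = ZG 0" by simp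
      qed
    qed
  qed
  moreover assume "i < m"
  ultimately show "ZG i = Z" unfolding Z_def by (cases i) auto
qed

lemma Z_Gs: assumes "i < m" shows "Z \<subseteq> Gs i"
proof -
  have "Z = ZG i" using ZG_all[OF assms] by simp
  thus ?thesis by (auto simp: ZG_eq)
qed

lemma Z_comm_Gs: assumes "i < m" "z \<in> Z" "g \<in> Gs i" shows "z \<otimes> g = g \<otimes> z"
proof -
  have "z \<in> ZG i" using ZG_all[OF assms(1)] assms(2) by simp
  thus ?thesis using assms(3) by (simp add: ZG_eq)
qed

lemma m0: "0 < m" using m2 by simp

lemma Z_carr: "z \<in> Z \<Longrightarrow> z \<in> carrier G" using Z_Gs[OF m0] Gs_carr[OF m0] by blast

lemma cardZ: "card Z = p" using es_i[OF m0] by (simp add: Z_def)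

lemma Z_central:
  assumes z: "z \<in> Z" and g: "g \<in> carrier G"
  shows "z \<otimes> g = g \<otimes> z"
proof (rule commute_generate[of "\<Union>i<m. Gs i"])
  show "(\<Union>i<m. Gs i) \<subseteq> carrier G" using UN_carr[of m] by simp
  show "z \<in> carrier G" using z by (rule Z_carr)
  show "g \<in> generate G (\<Union>i<m. Gs i)" using g gen_all by simp
  fix s assume "s \<in> (\<Union>i<m. Gs i)"
  then obtain i where i: "i < m" "s \<in> Gs i" by blast
  show "z \<otimes> s = s \<otimes> z" using Z_comm_Gs[OF i(1) z i(2)] .
qed

lemma Z_sub: "subgroup Z G"
proof (rule subgroupI)
  show "Z \<subseteq> carrier G" using Z_carr by auto
  have "\<one> \<in> Gs 0" using subgroup.one_closed[OF sub[OF m0]] .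
  moreover have "\<forall>g\<in>Gs 0. \<one> \<otimes> g = g \<otimes> \<one>" using Gs_carr[OF m0] by simp
  ultimately have "\<one> \<in> Z" by (simp add: Z_def ZG_eq)
  thus "Z \<noteq> {}" by auto
next
  fix z assume z: "z \<in> Z"
  have z0: "z \<in> Gs 0" using z Z_Gs[OF m0] by auto
  have "inv z \<in> Gs 0" by (rule subgroup.m_inv_closed[OF sub[OF m0] z0])
  moreover have "\<forall>g\<in>Gs 0. inv z \<otimes> g = g \<otimes> inv z"
  proof
    fix g assume g: "g \<in> Gs 0"
    have gc: "g \<in> carrier G" using Gs_carr[OF m0 g] .
    have "g \<otimes> z = z \<otimes> g" using Z_central[OF z gc] by simp
    from commute_inv[OF gc Z_carr[OF z] this] show "inv z \<otimes> g = g \<otimes> inv z" by simp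
  qed
  ultimately show "inv z \<in> Z" by (simp add: Z_def ZG_eq)
next
  fix a b assume ab: "a \<in> Z" "b \<in> Z"
  have "a \<in> Gs 0" "b \<in> Gs 0" using ab Z_Gs[OF m0] by auto
  hence "a \<otimes> b \<in> Gs 0" by (rule subgroup.m_closed[OF sub[OF m0]])
  moreover have "\<forall>g\<in>Gs 0. a \<otimes> b \<otimes> g = g \<otimes> (a \<otimes> b)"
  proof
    fix g assume g: "g \<in> Gs 0"
    have c: "a \<in> carrier G" "b \<in> carrier G" "g \<in> carrier G" using ab g Z_carr Gs_carr[of 0] m2 by auto
    have "a \<otimes> b \<otimes> g = a \<otimes> (g \<otimes> b)" using Z_central[OF ab(2) c(3)] c by (simp add: m_assoc)
    also have "\<dots> = g \<otimes> (a \<otimes> b)" using Z_central[OF ab(1) c(3)] c by (simp add: m_assoc[symmetric])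
    finally show "a \<otimes> b \<otimes> g = g \<otimes> (a \<otimes> b)" .
  qed
  ultimately show "a \<otimes> b \<in> Z" by (simp add: Z_def ZG_eq)
qed

lemma gcomm_local:
  assumes a: "i < m" "x \<in> Gs i" "y \<in> Gs i"
  shows "gcomm G x y \<in> Z"
proof -
  have "derived G (Gs i) = derived (G\<lparr>carrier := Gs i\<rparr>) (Gs i)"
    using derived_consistent[OF subset_refl sub[OF a(1)]] by simp
  also have "\<dots> = Z" using es_i[OF a(1)] ZG_all[OF a(1)] by simp
  finally have d: "derived G (Gs i) = Z" .
  have "gcomm G x y \<in> derived_set G (Gs i)" unfolding gcomm_def using a(2,3) by blast
  hence "gcomm G x y \<in> derived G (Gs i)" unfolding derived_def by (rule generate.incl)
  thus ?thesis using d by simp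
qed

lemma one_Z: "\<one> \<in> Z" using subgroup.one_closed[OF Z_sub] .

lemma gcomm_Gs: 
  assumes i: "i < m" and x: "x \<in> Gs i" and h: "h \<in> carrier G"
  shows "gcomm G x h \<in> Z"
proof (rule central_gcomm_generate[OF Z_sub Z_central UN_carr[OF le_refl]])
  show "x \<in> carrier G" using Gs_carr[OF i x] .
  show "h \<in> generate G (\<Union>i<m. Gs i)" using gen_all h by simp
  fix s assume "s \<in> (\<Union>i<m. Gs i)"
  then obtain j where j: "j < m" "s \<in> Gs j" by blast
  show "gcomm G x s \<in> Z"
  proof (cases "j = i")
    case True thus ?thesis using gcomm_local[OF i x] j by simp
  next
    case False
    have "x \<otimes> s = s \<otimes> x" using comm_ij[OF i j(1) _ x j(2)] False by simp
    hence "gcomm G x s = \<one>" using gcomm_one_iff[OF Gs_carr[OF i x] Gs_carr[OF j]] by simp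
    thus ?thesis using one_Z by simp
  qed
qed

lemma gcomm_Z:
  assumes g: "g \<in> carrier G" and h: "h \<in> carrier G"
  shows "gcomm G g h \<in> Z"
proof -
  have "gcomm G h g \<in> Z"
  proof (rule central_gcomm_generate[OF Z_sub Z_central UN_carr[OF le_refl] h])
    show "g \<in> generate G (\<Union>i<m. Gs i)" using gen_all g by simp
    fix s assume "s \<in> (\<Union>i<m. Gs i)"
    then obtain j where j: "j < m" "s \<in> Gs j" by blast
    have sc: "s \<in> carrier G" using Gs_carr[OF j] .
    have "gcomm G s h \<in> Z" using gcomm_Gs[OF j h] .
    hence "inv (gcomm G s h) \<in> Z" by (rule subgroup.m_inv_closed[OF Z_sub])
    thus "gcomm G h s \<in> Z" using gcomm_swap[OF sc h] by simp
  qed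
  hence "inv (gcomm G h g) \<in> Z" by (rule subgroup.m_inv_closed[OF Z_sub])
  thus ?thesis using gcomm_swap[OF h g] by simp
qed

end


context esetting begin

definition "SS = {inv g \<otimes> \<alpha> g | g. g \<in> carrier G}"
definition "N = comm_aut G \<alpha>"
definition "dd y = y \<otimes> dprod G \<alpha> y (m - 1)"

lemma N_def2: "N = generate G SS" by (simp add: N_def SS_def comm_aut_def)

lemma a_hom: "\<alpha> \<in> hom G G" using aiso by (rule iso_imp_homomorphism)

lemma a_gh: "group_hom G G \<alpha>"
  by (rule group_hom.intro[OF is_group is_group group_hom_axioms.intro[OF a_hom]])

lemma a_carr [simp]: "x \<in> carrier G \<Longrightarrow> \<alpha> x \<in> carrier G"
  by (rule group_hom.hom_closed[OF a_gh])

lemma a_mult: "x \<in> carrier G \<Longrightarrow> y \<in> carrier G \<Longrightarrow> \<alpha> (x \<otimes> y) = \<alpha> x \<otimes> \<alpha> y"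
  by (rule hom_mult[OF a_hom])

lemma a_inv: "x \<in> carrier G \<Longrightarrow> \<alpha> (inv x) = inv (\<alpha> x)"
  by (rule group_hom.hom_inv[OF a_gh])

lemma apow_carr [simp]: "x \<in> carrier G \<Longrightarrow> (\<alpha> ^^ k) x \<in> carrier G"
  by (induction k) simp_all

lemma apow_m: "x \<in> carrier G \<Longrightarrow> (\<alpha> ^^ m) x = x"
  using aord unfolding aut_order_is_def by blast

lemma apow_Gs: "i < m \<Longrightarrow> (\<alpha> ^^ j) ` Gs i = Gs ((i + j) mod m)"
proof (induction j)
  case 0 then show ?case by simp
next
  case (Suc j)
  have lt: "(i + j) mod m < m" using m0 by simp
  have "(\<alpha> ^^ Suc j) ` Gs i = \<alpha> ` ((\<alpha> ^^ j) ` Gs i)" by (simp add: image_comp)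
  also have "\<dots> = \<alpha> ` Gs ((i + j) mod m)" using Suc by simp
  also have "\<dots> = Gs (Suc ((i + j) mod m) mod m)" using aperm lt by simp
  also have "Suc ((i + j) mod m) mod m = (i + Suc j) mod m" by (simp add: mod_Suc_eq)
  finally show ?case .
qed

lemma apow_in: "i < m \<Longrightarrow> x \<in> Gs i \<Longrightarrow> (\<alpha> ^^ j) x \<in> Gs ((i + j) mod m)"
  using apow_Gs[of i j] by blast

lemma SS_carr: "SS \<subseteq> carrier G"
  unfolding SS_def by auto

lemma N_sub: "subgroup N G" unfolding N_def2 by (rule generate_is_subgroup[OF SS_carr])

lemma N_carr: "n \<in> N \<Longrightarrow> n \<in> carrier G" by (rule subgroup.mem_carrier[OF N_sub])

lemma s_N: "g \<in> carrier G \<Longrightarrow> inv g \<otimes> \<alpha> g \<in> N"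
  unfolding N_def2 SS_def by (rule generate.incl) blast

lemma dprod_carr [simp]: "y \<in> carrier G \<Longrightarrow> dprod G \<alpha> y k \<in> carrier G"
  by (induction k) simp_all

lemma dprod_comm:
  assumes y: "y \<in> Gs 0" and z: "z \<in> Gs 0"
  shows "k < m \<Longrightarrow> z \<otimes> dprod G \<alpha> y k = dprod G \<alpha> y k \<otimes> z"
proof (induction k)
  case 0 then show ?case using Gs_carr[OF m0 z] by simp
next
  case (Suc k)
  have yc: "y \<in> carrier G" using Gs_carr[OF m0 y] .
  have zc: "z \<in> carrier G" using Gs_carr[OF m0 z] .
  have w: "(\<alpha> ^^ Suc k) y \<in> Gs (Suc k)" using apow_in[OF m0 y, of "Suc k"] Suc.prems by simp
  have wc: "(\<alpha> ^^ Suc k) y \<in> carrier G" using yc by simp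
  have e1: "z \<otimes> (\<alpha> ^^ Suc k) y = (\<alpha> ^^ Suc k) y \<otimes> z"
    by (rule comm_ij[OF m0 Suc.prems _ z w]) simp
  have e0: "z \<otimes> dprod G \<alpha> y k = dprod G \<alpha> y k \<otimes> z" using Suc.IH Suc.prems by simp
  have "z \<otimes> dprod G \<alpha> y (Suc k) = (z \<otimes> dprod G \<alpha> y k) \<otimes> (\<alpha> ^^ Suc k) y"
    using yc zc wc by (simp add: m_assoc)
  also have "\<dots> = dprod G \<alpha> y k \<otimes> (z \<otimes> (\<alpha> ^^ Suc k) y)" unfolding e0 using yc zc wc by (simp add: m_assoc)
  also have "\<dots> = dprod G \<alpha> y (Suc k) \<otimes> z" unfolding e1 using yc zc wc by (simp add: m_assoc)
  finally show ?case .
qed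

lemma dprod_alpha:
  assumes yc: "y \<in> carrier G"
  shows "\<alpha> (y \<otimes> dprod G \<alpha> y k) = dprod G \<alpha> y (Suc k)"
proof (induction k)
  case 0 then show ?case using yc by simp
next
  case (Suc k)
  have wc: "(\<alpha> ^^ Suc k) y \<in> carrier G" using yc by simp
  have "\<alpha> (y \<otimes> dprod G \<alpha> y (Suc k)) = \<alpha> ((y \<otimes> dprod G \<alpha> y k) \<otimes> (\<alpha> ^^ Suc k) y)"
    using yc wc by (simp add: m_assoc)
  also have "\<dots> = \<alpha> (y \<otimes> dprod G \<alpha> y k) \<otimes> \<alpha> ((\<alpha> ^^ Suc k) y)"
    using yc wc by (simp add: a_mult)
  also have "\<dots> = dprod G \<alpha> y (Suc (Suc k))" using Suc.IH by simp
  finally show ?case .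
qed

lemma dd_carr: "y \<in> Gs 0 \<Longrightarrow> dd y \<in> carrier G"
  unfolding dd_def using Gs_carr[OF m0] by simp

lemma dd_fix:
  assumes y: "y \<in> Gs 0"
  shows "\<alpha> (dd y) = dd y"
proof -
  have yc: "y \<in> carrier G" using Gs_carr[OF m0 y] .
  have e: "Suc (m - 1) = m" using m2 by simp
  have "\<alpha> (dd y) = dprod G \<alpha> y (Suc (m - 1))" unfolding dd_def by (rule dprod_alpha[OF yc])
  also have "\<dots> = dprod G \<alpha> y (m - 1) \<otimes> (\<alpha> ^^ Suc (m - 1)) y" by (simp only: dprod.simps)
  also have "\<dots> = dprod G \<alpha> y (m - 1) \<otimes> y" unfolding e using apow_m[OF yc] by simp
  also have "\<dots> = y \<otimes> dprod G \<alpha> y (m - 1)" using dprod_comm[OF y y, of "m - 1"] m2 by simp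
  finally show ?thesis unfolding dd_def .
qed

lemma a_gcomm: "a \<in> carrier G \<Longrightarrow> b \<in> carrier G \<Longrightarrow> \<alpha> (gcomm G a b) = gcomm G (\<alpha> a) (\<alpha> b)"
  by (simp add: gcomm_def a_mult a_inv)

lemma fixed_comm_s:
  assumes dc: "d \<in> carrier G" and df: "\<alpha> d = d" and g: "g \<in> carrier G"
  shows "d \<otimes> (inv g \<otimes> \<alpha> g) = (inv g \<otimes> \<alpha> g) \<otimes> d"
proof -
  have ag: "\<alpha> g \<in> carrier G" using g by simp
  have "gcomm G g d \<in> derived_set G (carrier G)" unfolding gcomm_def using g dc by blast
  hence "gcomm G g d \<in> derived G (carrier G)" unfolding derived_def by (rule generate.incl)
  hence "gcomm G g d \<in> fixed_points G \<alpha>" using ader by blast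
  hence "\<alpha> (gcomm G g d) = gcomm G g d" by (simp add: fixed_points_def)
  hence "gcomm G (\<alpha> g) d = gcomm G g d" using a_gcomm[OF g dc] df by simp
  hence "\<alpha> g \<otimes> d \<otimes> inv (\<alpha> g) \<otimes> inv d = g \<otimes> d \<otimes> inv g \<otimes> inv d" by (simp add: gcomm_def)
  hence "\<alpha> g \<otimes> d \<otimes> inv (\<alpha> g) = g \<otimes> d \<otimes> inv g" using ag g dc by simp
  hence "(inv (\<alpha> g) \<otimes> g) \<otimes> d = d \<otimes> (inv (\<alpha> g) \<otimes> g)"
    using conj_eq_commute[OF g dc ag] by simp
  hence c: "d \<otimes> (inv (\<alpha> g) \<otimes> g) = (inv (\<alpha> g) \<otimes> g) \<otimes> d" by (rule sym)
  have tc: "inv (\<alpha> g) \<otimes> g \<in> carrier G" using ag g by simp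
  have "d \<otimes> inv (inv (\<alpha> g) \<otimes> g) = inv (inv (\<alpha> g) \<otimes> g) \<otimes> d" by (rule commute_inv[OF dc tc c])
  moreover have "inv (inv (\<alpha> g) \<otimes> g) = inv g \<otimes> \<alpha> g" using ag g by (simp add: inv_mult_group)
  ultimately show ?thesis by simp
qed

lemma fixed_comm_N:
  assumes dc: "d \<in> carrier G" and df: "\<alpha> d = d" and n: "n \<in> N"
  shows "d \<otimes> n = n \<otimes> d"
proof (rule commute_generate[OF SS_carr dc])
  show "n \<in> generate G SS" using n N_def2 by simp
  fix s assume "s \<in> SS"
  then obtain g where g: "g \<in> carrier G" "s = inv g \<otimes> \<alpha> g" unfolding SS_def by blast
  show "d \<otimes> s = s \<otimes> d" using fixed_comm_s[OF dc df g(1)] g(2) by simp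
qed

lemma N_Gs0_Z:
  assumes xN: "x \<in> N" and x0: "x \<in> Gs 0"
  shows "x \<in> Z"
proof -
  have xc: "x \<in> carrier G" using Gs_carr[OF m0 x0] .
  have "\<forall>y\<in>Gs 0. x \<otimes> y = y \<otimes> x"
  proof
    fix y assume y: "y \<in> Gs 0"
    have yc: "y \<in> carrier G" using Gs_carr[OF m0 y] .
    let ?D = "dprod G \<alpha> y (m - 1)"
    have Dc: "?D \<in> carrier G" using yc by simp
    have c1: "dd y \<otimes> x = x \<otimes> dd y" by (rule fixed_comm_N[OF dd_carr[OF y] dd_fix[OF y] xN])
    have c2: "x \<otimes> ?D = ?D \<otimes> x" using dprod_comm[OF y x0, of "m - 1"] m2 by simp
    have "(y \<otimes> x) \<otimes> ?D = y \<otimes> (x \<otimes> ?D)" using yc xc Dc by (simp add: m_assoc)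
    also have "\<dots> = y \<otimes> (?D \<otimes> x)" using c2 by simp
    also have "\<dots> = dd y \<otimes> x" unfolding dd_def using yc xc Dc by (simp add: m_assoc)
    also have "\<dots> = x \<otimes> dd y" by (rule c1)
    also have "\<dots> = (x \<otimes> y) \<otimes> ?D" unfolding dd_def using yc xc Dc by (simp add: m_assoc)
    finally show "x \<otimes> y = y \<otimes> x" using yc xc Dc by simp
  qed
  hence "x \<in> ZG 0" using x0 by (simp add: ZG_eq)
  thus ?thesis by (simp add: Z_def)
qed

end


context esetting begin

lemma m1: "1 < m" using m2 by simp

lemma noncomm: "\<exists>x\<in>Gs 0. \<exists>y\<in>Gs 0. x \<otimes> y \<noteq> y \<otimes> x"
proof (rule ccontr)
  assume "\<not> ?thesis"
  hence a: "\<forall>x\<in>Gs 0. \<forall>y\<in>Gs 0. x \<otimes> y = y \<otimes> x" by blast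
  have "ZG 0 = Gs 0" unfolding ZG_eq using a by blast
  hence "p = p ^ 3" using es_i[OF m0] cardGs[OF m0] by simp
  moreover have "p ^ 1 < p ^ 3" using p_gt1 by (intro power_strict_increasing) simp_all
  ultimately show False by simp
qed

lemma conj_s_N:
  assumes x: "x \<in> carrier G" and y: "y \<in> carrier G"
  shows "inv y \<otimes> (inv x \<otimes> \<alpha> x) \<otimes> y \<in> N"
proof -
  have xy: "x \<otimes> y \<in> carrier G" using x y by simp
  have "inv y \<otimes> (inv x \<otimes> \<alpha> x) \<otimes> y = (inv (x \<otimes> y) \<otimes> \<alpha> (x \<otimes> y)) \<otimes> inv (inv y \<otimes> \<alpha> y)"
    using x y by (simp add: a_mult inv_mult_group m_assoc)
  also have "\<dots> \<in> N"
    by (rule subgroup.m_closed[OF N_sub s_N[OF xy] subgroup.m_inv_closed[OF N_sub s_N[OF y]]])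
  finally show ?thesis .
qed

lemma Z_N: "Z \<subseteq> N"
proof -
  obtain x y where x: "x \<in> Gs 0" and y: "y \<in> Gs 0" and nc: "x \<otimes> y \<noteq> y \<otimes> x"
    using noncomm by blast
  have xc: "x \<in> carrier G" using Gs_carr[OF m0 x] .
  have yc: "y \<in> carrier G" using Gs_carr[OF m0 y] .
  have a1: "\<alpha> x \<in> Gs 1"
  proof -
    have "(\<alpha> ^^ 1) x \<in> Gs ((0 + 1) mod m)" by (rule apow_in[OF m0 x])
    thus ?thesis using m1 by simp
  qed
  have ac: "\<alpha> x \<in> carrier G" using xc by simp
  let ?v = "x \<otimes> inv y \<otimes> inv x"
  have v0: "?v \<in> Gs 0"
    using subgroup.m_closed[OF sub[OF m0] subgroup.m_closed[OF sub[OF m0] x subgroup.m_inv_closed[OF sub[OF m0] y]]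
        subgroup.m_inv_closed[OF sub[OF m0] x]] .
  have vc: "?v \<in> carrier G" using xc yc by simp
  have va: "?v \<otimes> \<alpha> x = \<alpha> x \<otimes> ?v" by (rule comm_ij[OF m0 m1 _ v0 a1]) simp
  let ?w = "inv x \<otimes> \<alpha> x"
  have wN: "?w \<in> N" by (rule s_N[OF xc])
  have cN: "inv y \<otimes> ?w \<otimes> y \<in> N" by (rule conj_s_N[OF xc yc])
  have "inv ?w \<otimes> (inv y \<otimes> ?w \<otimes> y) = inv (\<alpha> x) \<otimes> ((?v \<otimes> \<alpha> x) \<otimes> y)"
    using xc yc ac by (simp add: inv_mult_group m_assoc)
  also have "\<dots> = inv (\<alpha> x) \<otimes> ((\<alpha> x \<otimes> ?v) \<otimes> y)" using va by simp
  also have "\<dots> = ?v \<otimes> y" using xc yc ac vc by (simp add: m_assoc)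
  finally have ue: "inv ?w \<otimes> (inv y \<otimes> ?w \<otimes> y) = ?v \<otimes> y" .
  have uN: "?v \<otimes> y \<in> N" unfolding ue[symmetric]
    by (rule subgroup.m_closed[OF N_sub subgroup.m_inv_closed[OF N_sub wN] cN])
  have u0: "?v \<otimes> y \<in> Gs 0" by (rule subgroup.m_closed[OF sub[OF m0] v0 y])
  have uZ: "?v \<otimes> y \<in> Z" by (rule N_Gs0_Z[OF uN u0])
  have iyc: "inv y \<in> carrier G" using yc by simp
  have ug: "?v \<otimes> y = gcomm G x (inv y)" using xc yc by (simp add: gcomm_def)
  have u1: "?v \<otimes> y \<noteq> \<one>"
  proof
    assume "?v \<otimes> y = \<one>"
    hence "x \<otimes> inv y = inv y \<otimes> x" using gcomm_one_iff[OF xc iyc] ug by simp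
    hence "x \<otimes> inv (inv y) = inv (inv y) \<otimes> x" by (rule commute_inv[OF xc iyc])
    thus False using nc yc by simp
  qed
  have K: "subgroup (Z \<inter> N) G" by (rule subgroups_Inter_pair[OF Z_sub N_sub])
  have "Z \<inter> N = Z"
    by (rule prime_order_sub[OF Z_sub cardZ pp K Int_lower1 _ u1]) (use uZ uN in blast)
  thus ?thesis by blast
qed

lemma N_normal:
  assumes g: "g \<in> carrier G" and n: "n \<in> N"
  shows "g \<otimes> n \<otimes> inv g \<in> N"
proof -
  have nc: "n \<in> carrier G" using N_carr[OF n] .
  have "g \<otimes> n \<otimes> inv g = gcomm G g n \<otimes> n" using g nc by (simp add: gcomm_def m_assoc)
  moreover have "gcomm G g n \<in> N" using gcomm_Z[OF g nc] Z_N by blast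
  ultimately show ?thesis using subgroup.m_closed[OF N_sub _ n] by simp
qed

lemma apow_N: "x \<in> carrier G \<Longrightarrow> \<exists>n\<in>N. (\<alpha> ^^ k) x = x \<otimes> n"
proof (induction k)
  case 0
  have "x = x \<otimes> \<one>" using 0 by simp
  thus ?case using subgroup.one_closed[OF N_sub] by auto
next
  case (Suc k)
  then obtain n where n: "n \<in> N" "(\<alpha> ^^ k) x = x \<otimes> n" by blast
  let ?z = "(\<alpha> ^^ k) x"
  have zc: "?z \<in> carrier G" using Suc.prems by simp
  have nc: "n \<in> carrier G" using N_carr[OF n(1)] .
  define t where "t = inv ?z \<otimes> \<alpha> ?z"
  have tN: "t \<in> N" unfolding t_def by (rule s_N[OF zc])
  have tc: "t \<in> carrier G" using N_carr[OF tN] .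
  have "(\<alpha> ^^ Suc k) x = \<alpha> ?z" by simp
  also have "\<dots> = ?z \<otimes> t" unfolding t_def using zc by simp
  also have "\<dots> = x \<otimes> (n \<otimes> t)" unfolding n(2) using Suc.prems nc tc by (simp add: m_assoc)
  finally show ?case using subgroup.m_closed[OF N_sub n(1) tN] by blast
qed

lemma G_eq: "carrier G = Gs 0 <#> N"
proof
  have sm: "subgroup (Gs 0 <#> N) G" by (rule normal_set_mult_subgroup'[OF sub[OF m0] N_sub N_normal])
  have "(\<Union>i<m. Gs i) \<subseteq> Gs 0 <#> N"
  proof
    fix x assume "x \<in> (\<Union>i<m. Gs i)"
    then obtain i where i: "i < m" "x \<in> Gs i" by blast
    have xc: "x \<in> carrier G" using Gs_carr[OF i] .
    obtain n where n: "n \<in> N" "(\<alpha> ^^ (m - i)) x = x \<otimes> n" using apow_N[OF xc] by blast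
    have nc: "n \<in> carrier G" using N_carr[OF n(1)] .
    have "(\<alpha> ^^ (m - i)) x \<in> Gs ((i + (m - i)) mod m)" by (rule apow_in[OF i])
    moreover have "(i + (m - i)) mod m = 0" using i(1) by simp
    ultimately have a0: "(\<alpha> ^^ (m - i)) x \<in> Gs 0" by simp
    have "x = (\<alpha> ^^ (m - i)) x \<otimes> inv n" unfolding n(2) using xc nc by (simp add: m_assoc)
    moreover have "inv n \<in> N" by (rule subgroup.m_inv_closed[OF N_sub n(1)])
    ultimately show "x \<in> Gs 0 <#> N" using a0 unfolding set_mult_iff by blast
  qed
  hence "generate G (\<Union>i<m. Gs i) \<subseteq> Gs 0 <#> N" by (rule generate_subgroup_incl[OF _ sm])
  thus "carrier G \<subseteq> Gs 0 <#> N" using gen_all by simp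
  show "Gs 0 <#> N \<subseteq> carrier G" by (rule subgroup.subset[OF sm])
qed

lemma Gs0_N: "Gs 0 \<inter> N = Z"
  using N_Gs0_Z Z_N Z_Gs[OF m0] by blast

lemma card_rel: "card (carrier G) * p = p ^ 3 * card N"
proof -
  have "card (Gs 0 <#> N) * card (Gs 0 \<inter> N) = card (Gs 0) * card N"
    by (rule card_set_mult[OF fin sub[OF m0] N_sub])
  thus ?thesis unfolding G_eq[symmetric] Gs0_N cardZ cardGs[OF m0] .
qed

lemma card_N: "card N = p ^ (2 * m - 1)"
proof -
  have ex: "3 + (2 * m - 1) = Suc (2 * m + 1)" using m2 by simp
  have "p ^ 3 * p ^ (2 * m - 1) = p ^ (3 + (2 * m - 1))" by (simp only: power_add)
  also have "\<dots> = p ^ Suc (2 * m + 1)" unfolding ex ..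
  also have "\<dots> = p ^ (2 * m + 1) * p" by (simp only: power_Suc2)
  also have "\<dots> = p ^ 3 * card N" using card_rel card_G by simp
  finally have "p ^ 3 * p ^ (2 * m - 1) = p ^ 3 * card N" .
  thus ?thesis using p_gt1 by simp
qed

end


context esetting begin

lemma HH0: "HH 0 = {\<one>}" unfolding HH_def by (simp add: generate_empty)

lemma Z_inv: "z \<in> Z \<Longrightarrow> inv z \<in> Z" by (rule subgroup.m_inv_closed[OF Z_sub])
lemma Z_mult: "a \<in> Z \<Longrightarrow> b \<in> Z \<Longrightarrow> a \<otimes> b \<in> Z" by (rule subgroup.m_closed[OF Z_sub])

lemma central_in_Z: "k \<le> m \<Longrightarrow> c \<in> HH k \<Longrightarrow> (\<forall>g\<in>carrier G. c \<otimes> g = g \<otimes> c) \<Longrightarrow> c \<in> Z"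
proof (induction k arbitrary: c)
  case 0 then show ?case using HH0 one_Z by simp
next
  case (Suc k)
  have k: "k < m" "k \<le> m" using Suc.prems(1) by auto
  obtain h g where hg: "h \<in> HH k" "g \<in> Gs k" "c = h \<otimes> g"
    using Suc.prems(2) unfolding HH_Suc[OF k(1)] set_mult_iff by blast
  have hc: "h \<in> carrier G" by (rule HH_carr[OF k(2) hg(1)])
  have gc: "g \<in> carrier G" by (rule Gs_carr[OF k(1) hg(2)])
  have cen: "\<And>x. x \<in> carrier G \<Longrightarrow> c \<otimes> x = x \<otimes> c" using Suc.prems(3) by blast
  have "\<forall>z\<in>Gs k. g \<otimes> z = z \<otimes> g"
  proof
    fix z assume z: "z \<in> Gs k"
    have zc: "z \<in> carrier G" by (rule Gs_carr[OF k(1) z])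
    have hz: "h \<otimes> z = z \<otimes> h" by (rule HH_comm[OF k(1) hg(1) z])
    have "h \<otimes> (g \<otimes> z) = c \<otimes> z" using hg(3) hc gc zc by (simp add: m_assoc)
    also have "\<dots> = z \<otimes> c" by (rule cen[OF zc])
    also have "\<dots> = (z \<otimes> h) \<otimes> g" using hg(3) hc gc zc by (simp add: m_assoc)
    also have "\<dots> = h \<otimes> (z \<otimes> g)" unfolding hz[symmetric] using hc gc zc by (simp add: m_assoc)
    finally show "g \<otimes> z = z \<otimes> g" using hc gc zc by simp
  qed
  hence "g \<in> ZG k" using hg(2) by (simp add: ZG_eq)
  hence gZ: "g \<in> Z" using ZG_all[OF k(1)] by simp
  have igZ: "inv g \<in> Z" by (rule Z_inv[OF gZ])
  have he: "h = c \<otimes> inv g" using hg(3) hc gc by (simp add: m_assoc)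
  have cc: "c \<in> carrier G" using hg(3) hc gc by simp
  have "\<forall>x\<in>carrier G. h \<otimes> x = x \<otimes> h"
  proof
    fix x assume x: "x \<in> carrier G"
    have igc: "inv g \<in> carrier G" using gc by simp
    have e1: "inv g \<otimes> x = x \<otimes> inv g" by (rule Z_central[OF igZ x])
    have "h \<otimes> x = c \<otimes> (inv g \<otimes> x)" unfolding he using cc igc x by (simp add: m_assoc)
    also have "\<dots> = (c \<otimes> x) \<otimes> inv g" unfolding e1 using cc igc x by (simp add: m_assoc)
    also have "\<dots> = (x \<otimes> c) \<otimes> inv g" using cen[OF x] by simp
    also have "\<dots> = x \<otimes> h" unfolding he using cc igc x by (simp add: m_assoc)
    finally show "h \<otimes> x = x \<otimes> h" .
  qed
  hence "h \<in> Z" using Suc.IH[OF k(2) hg(1)] by simp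
  thus ?case unfolding hg(3) by (rule Z_mult[OF _ gZ])
qed

lemma centre_N: "grp_center (G\<lparr>carrier := N\<rparr>) = Z"
proof
  show "Z \<subseteq> grp_center (G\<lparr>carrier := N\<rparr>)"
  proof
    fix z assume z: "z \<in> Z"
    have "z \<in> N" using z Z_N by blast
    moreover have "\<forall>g\<in>N. z \<otimes> g = g \<otimes> z" using Z_central[OF z] N_carr by blast
    ultimately show "z \<in> grp_center (G\<lparr>carrier := N\<rparr>)" by (simp add: grp_center_restr)
  qed
next
  show "grp_center (G\<lparr>carrier := N\<rparr>) \<subseteq> Z"
  proof
    fix c assume "c \<in> grp_center (G\<lparr>carrier := N\<rparr>)"
    hence cN: "c \<in> N" and cn: "\<forall>n\<in>N. c \<otimes> n = n \<otimes> c" by (simp_all add: grp_center_restr)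
    have cc: "c \<in> carrier G" using N_carr[OF cN] .
    define \<kappa> where "\<kappa> g = gcomm G c g" for g
    have kc: "g \<in> carrier G \<Longrightarrow> \<kappa> g \<in> carrier G" for g unfolding \<kappa>_def using cc by simp
    have kZ: "g \<in> carrier G \<Longrightarrow> \<kappa> g \<in> Z" for g unfolding \<kappa>_def by (rule gcomm_Z[OF cc])
    have K1: "\<kappa> (g \<otimes> n) = \<kappa> g" if g: "g \<in> carrier G" and n: "n \<in> N" for g n
    proof -
      have nc: "n \<in> carrier G" using N_carr[OF n] .
      have "\<kappa> n = \<one>" unfolding \<kappa>_def using gcomm_one_iff[OF cc nc] cn n by simp
      thus ?thesis using gcomm_mult_right[OF cc g nc] g nc cc unfolding \<kappa>_def by simp
    qed
    have K2: "\<kappa> (\<alpha> g) = \<kappa> g" if g: "g \<in> carrier G" for g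
    proof -
      have "\<alpha> g = g \<otimes> (inv g \<otimes> \<alpha> g)" using g by simp
      hence "\<kappa> (\<alpha> g) = \<kappa> (g \<otimes> (inv g \<otimes> \<alpha> g))" by simp
      also have "\<dots> = \<kappa> g" by (rule K1[OF g s_N[OF g]])
      finally show ?thesis .
    qed
    have K3: "\<kappa> ((\<alpha> ^^ j) y) = \<kappa> y" if y: "y \<in> carrier G" for y j
    proof (induction j)
      case 0 then show ?case by simp
    next
      case (Suc j)
      have "\<kappa> ((\<alpha> ^^ Suc j) y) = \<kappa> (\<alpha> ((\<alpha> ^^ j) y))" by simp
      also have "\<dots> = \<kappa> ((\<alpha> ^^ j) y)" by (rule K2) (simp add: y)
      finally show ?case using Suc.IH by simp
    qed
    have K4: "\<kappa> (a \<otimes> b) = \<kappa> a \<otimes> \<kappa> b" if a: "a \<in> carrier G" and b: "b \<in> carrier G" for a b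
    proof -
      have "a \<otimes> \<kappa> b = \<kappa> b \<otimes> a" using Z_central[OF kZ[OF b] a] by simp
      hence "a \<otimes> \<kappa> b \<otimes> inv a = \<kappa> b" using a kc[OF b] by (simp add: m_assoc)
      thus ?thesis using gcomm_mult_right[OF cc a b] unfolding \<kappa>_def by simp
    qed
    have K5: "\<kappa> (dprod G \<alpha> y k) = \<kappa> y [^] k" if y: "y \<in> carrier G" for y k
    proof (induction k)
      case 0 then show ?case unfolding \<kappa>_def using cc by (simp add: gcomm_def)
    next
      case (Suc k)
      have "\<kappa> (dprod G \<alpha> y (Suc k)) = \<kappa> (dprod G \<alpha> y k) \<otimes> \<kappa> ((\<alpha> ^^ Suc k) y)"
        using K4 y by simp
      also have "\<kappa> ((\<alpha> ^^ Suc k) y) = \<kappa> y" by (rule K3[OF y])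
      also have "\<kappa> (dprod G \<alpha> y k) \<otimes> \<kappa> y = \<kappa> y [^] k \<otimes> \<kappa> y" using Suc.IH by simp
      finally show ?case by simp
    qed
    have cy: "c \<otimes> y = y \<otimes> c" if y: "y \<in> Gs 0" for y
    proof -
      have yc: "y \<in> carrier G" using Gs_carr[OF m0 y] .
      have e: "Suc (m - 1) = m" using m2 by simp
      have "\<kappa> (dd y) = \<kappa> y \<otimes> \<kappa> y [^] (m - 1)" unfolding dd_def using K4 K5 yc by simp
      also have "\<dots> = \<kappa> y [^] Suc (m - 1)" by (rule nat_pow_Suc2[symmetric, OF kc[OF yc]])
      finally have k1: "\<kappa> (dd y) = \<kappa> y [^] m" unfolding e .
      have "dd y \<otimes> c = c \<otimes> dd y" by (rule fixed_comm_N[OF dd_carr[OF y] dd_fix[OF y] cN])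
      hence "\<kappa> (dd y) = \<one>" unfolding \<kappa>_def using gcomm_one_iff[OF cc dd_carr[OF y]] by simp
      hence "\<kappa> y [^] m = \<one>" using k1 by simp
      hence "\<kappa> y = \<one>" by (rule prime_order_coprime_pow[OF Z_sub cardZ pp kZ[OF yc] _ cop])
      thus ?thesis unfolding \<kappa>_def using gcomm_one_iff[OF cc yc] by simp
    qed
    have "\<forall>g\<in>carrier G. c \<otimes> g = g \<otimes> c"
    proof
      fix g assume "g \<in> carrier G"
      then obtain y n where yn: "y \<in> Gs 0" "n \<in> N" "g = y \<otimes> n" unfolding G_eq set_mult_iff by blast
      have yc: "y \<in> carrier G" using Gs_carr[OF m0 yn(1)] .
      have nc: "n \<in> carrier G" using N_carr[OF yn(2)] .
      have e1: "c \<otimes> y = y \<otimes> c" by (rule cy[OF yn(1)])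
      have e2: "c \<otimes> n = n \<otimes> c" using cn yn(2) by blast
      have "c \<otimes> (y \<otimes> n) = (c \<otimes> y) \<otimes> n" using cc yc nc by (simp add: m_assoc)
      also have "\<dots> = y \<otimes> (c \<otimes> n)" unfolding e1 using cc yc nc by (simp add: m_assoc)
      also have "\<dots> = (y \<otimes> n) \<otimes> c" unfolding e2 using cc yc nc by (simp add: m_assoc)
      finally show "c \<otimes> g = g \<otimes> c" using yn(3) by simp
    qed
    moreover have "c \<in> HH m" using cc HHm by simp
    ultimately show "c \<in> Z" using central_in_Z[OF le_refl] by blast
  qed
qed

lemma N_ss: "N \<subseteq> carrier G" using subgroup.subset[OF N_sub] .

lemma derived_N: "derived G N = Z"
proof
  show "derived G N \<subseteq> Z"
    unfolding derived_def
  proof (rule generate_subgroup_incl[OF _ Z_sub])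
    show "derived_set G N \<subseteq> Z"
    proof
      fix x assume "x \<in> derived_set G N"
      then obtain a b where ab: "a \<in> N" "b \<in> N" "x = a \<otimes> b \<otimes> inv a \<otimes> inv b" by blast
      have "x = gcomm G a b" using ab(3) by (simp add: gcomm_def)
      thus "x \<in> Z" using gcomm_Z[OF N_carr[OF ab(1)] N_carr[OF ab(2)]] by simp
    qed
  qed
  show "Z \<subseteq> derived G N"
  proof (cases "\<exists>a\<in>N. \<exists>b\<in>N. gcomm G a b \<noteq> \<one>")
    case True
    then obtain a b where ab: "a \<in> N" "b \<in> N" "gcomm G a b \<noteq> \<one>" by blast
    have K: "subgroup (derived G N) G" by (rule derived_is_subgroup[OF N_ss])
    have KZ: "derived G N \<subseteq> Z"
      unfolding derived_def
    proof (rule generate_subgroup_incl[OF _ Z_sub])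
      show "derived_set G N \<subseteq> Z"
      proof
        fix x assume "x \<in> derived_set G N"
        then obtain a b where ab: "a \<in> N" "b \<in> N" "x = a \<otimes> b \<otimes> inv a \<otimes> inv b" by blast
        have "x = gcomm G a b" using ab(3) by (simp add: gcomm_def)
        thus "x \<in> Z" using gcomm_Z[OF N_carr[OF ab(1)] N_carr[OF ab(2)]] by simp
      qed
    qed
    have "gcomm G a b \<in> derived_set G N" unfolding gcomm_def using ab(1,2) by blast
    hence "gcomm G a b \<in> derived G N" unfolding derived_def by (rule generate.incl)
    hence "derived G N = Z" by (rule prime_order_sub[OF Z_sub cardZ pp K KZ _ ab(3)])
    thus ?thesis by simp
  next
    case False
    have "N \<subseteq> grp_center (G\<lparr>carrier := N\<rparr>)"
    proof
      fix a assume a: "a \<in> N"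
      have "\<forall>b\<in>N. a \<otimes> b = b \<otimes> a"
      proof
        fix b assume b: "b \<in> N"
        have "gcomm G a b = \<one>" using False a b by blast
        thus "a \<otimes> b = b \<otimes> a" using gcomm_one_iff[OF N_carr[OF a] N_carr[OF b]] by simp
      qed
      thus "a \<in> grp_center (G\<lparr>carrier := N\<rparr>)" using a by (simp add: grp_center_restr)
    qed
    hence "N \<subseteq> Z" using centre_N by simp
    hence "card N \<le> card Z" using card_mono[OF _ _] cardZ p_gt1
      by (metis card.infinite not_one_less_zero card_mono)
    hence le: "p ^ (2 * m - 1) \<le> p" using card_N cardZ by simp
    have "p ^ 1 < p ^ (2 * m - 1)" using p_gt1 m2 by (intro power_strict_increasing) simp_all
    thus ?thesis using le by simp
  qed
qed

lemma final:
  "extra_special p (G\<lparr>carrier := comm_aut G \<alpha>\<rparr>) \<and> card (carrier G) = p ^ 2 * card (comm_aut G \<alpha>)"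
proof
  have NN: "comm_aut G \<alpha> = N" by (simp add: N_def)
  have "group (G\<lparr>carrier := N\<rparr>)" by (rule subgroup_imp_group[OF N_sub])
  moreover have "finite (carrier (G\<lparr>carrier := N\<rparr>))" using finite_subset[OF N_ss fin] by simp
  moreover have "\<exists>n. card (carrier (G\<lparr>carrier := N\<rparr>)) = p ^ n" using card_N by auto
  moreover have "derived (G\<lparr>carrier := N\<rparr>) (carrier (G\<lparr>carrier := N\<rparr>)) = grp_center (G\<lparr>carrier := N\<rparr>)"
    using derived_consistent[OF subset_refl N_sub] derived_N centre_N by simp
  moreover have "card (grp_center (G\<lparr>carrier := N\<rparr>)) = p" using centre_N cardZ by simp
  ultimately show "extra_special p (G\<lparr>carrier := comm_aut G \<alpha>\<rparr>)" unfolding NN extra_special_def by blast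
  have e: "p ^ 3 = p ^ 2 * p" by (simp add: power2_eq_square power3_eq_cube)
  have "card (carrier G) * p = p ^ 3 * card N" by (rule card_rel)
  also have "\<dots> = (p ^ 2 * card N) * p" unfolding e by (simp add: algebra_simps)
  finally have "card (carrier G) * p = p ^ 2 * card N * p" .
  thus "card (carrier G) = p ^ 2 * card (comm_aut G \<alpha>)" unfolding NN using p_gt1 by simp
qed

end

theorem lemma2p5:
  fixes G (structure) and Gs :: "nat \<Rightarrow> 'a set" and \<alpha> :: "'a \<Rightarrow> 'a" and m p :: nat
  assumes "group G" and "finite (carrier G)"
    and "m \<ge> 2" and "Factorial_Ring.prime p" and "coprime m p"
    and "iterated_central_product G Gs m"
    and "\<forall>i<m. extra_special p (G\<lparr>carrier := Gs i\<rparr>) \<and> card (Gs i) = p ^ 3"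
    and "\<forall>i<m. \<forall>j<m. G\<lparr>carrier := Gs i\<rparr> \<cong> G\<lparr>carrier := Gs j\<rparr>"
    and "\<alpha> \<in> iso G G"
    and "aut_order_is G \<alpha> m"
    and "\<forall>i<m. \<alpha> ` (Gs i) = Gs (Suc i mod m)"
    and "derived G (carrier G) \<subseteq> fixed_points G \<alpha>"
  shows "extra_special p (G\<lparr>carrier := comm_aut G \<alpha>\<rparr>)
         \<and> card (carrier G) = p ^ 2 * card (comm_aut G \<alpha>)"
proof -
  interpret esetting G Gs \<alpha> m p
    by (rule esetting.intro[OF assms(1) esetting_axioms.intro]) (use assms in auto)
  show ?thesis by (rule final)
qed

end
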